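(* There exists a unique root-lattice-graded $\mathbb{Q}(q)$-algebra surjection $\pi_B:U_q^+\to\mathcal{P}_B$ with $\pi_B(E_i)=e_i$ for all $i=1,\dots,n$.
   Context: $\mathfrak{g}$ is a symmetrizable Kac–Moody algebra of rank $n$ with Cartan matrix $A=(a_{ij})$; $d_1,\dots,d_n$ are coprime positive integers with $c_{ij}:=d_ia_{ij}=d_ja_{ji}$, and the invariant form is normalized by $(\alpha_i,\alpha_j)=c_{ij}$. For each pair $i<j$ with $a_{ij}\ne0$ choose $\sigma_{ij}\in\{\pm1\}$, and set $b_{ij}=\sigma_{ij}c_{ij}$ ($i<j$), $b_{ii}=0$, $b_{ij}=-\sigma_{ji}c_{ij}$ ($i>j$) (with $b_{ij}=0$ when $a_{ij}=0$). $U_q^+$ is the subalgebra of the quantum enveloping algebra $U_q(\mathfrak{g})$ generated by $E_1,\dots,E_n$ (equivalently, the $\mathbb{Q}(q)$-algebra on $E_i$ subject to the quantum Serre relations $\sum_{k=0}^{1-a_{ij}}(-1)^k\binom{1-a_{ij}}{k}_{q_i}E_i^{1-a_{ij}-k}E_jE_i^k=0$, $i\ne j$), graded by weight with $E_i$ of weight $\alpha_i$. $\mathcal{P}_B$ is the $\mathbb{Q}(q)$-algebra generated by $e_1,\dots,e_n$ with relations $e_ie_j=q^{b_{ij}}e_je_i$, graded by giving $e_i$ weight $\alpha_i$. *)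

theory Defs
  imports "HOL-Algebra.QuotRing" "HOL-Library.Poly_Mapping"
          "HOL-Computational_Algebra.Fraction_Field"
          "HOL-Computational_Algebra.Polynomial"
begin

type_synonym Qq = "rat poly fract"

definition qq :: Qq where "qq = Fraction_Field.Fract [:0, 1:] 1"

definition qint :: "Qq \<Rightarrow> nat \<Rightarrow> Qq" where
  "qint t m = (t ^ m - inverse t ^ m) / (t - inverse t)"

definition qfact :: "Qq \<Rightarrow> nat \<Rightarrow> Qq" where
  "qfact t m = (\<Prod>k\<in>{1..m}. qint t k)"

definition qbinom :: "Qq \<Rightarrow> nat \<Rightarrow> nat \<Rightarrow> Qq" where
  "qbinom t m k = qfact t m / (qfact t k * qfact t (m - k))"

definition sym_GCM :: "nat \<Rightarrow> (nat \<Rightarrow> nat \<Rightarrow> int) \<Rightarrow> (nat \<Rightarrow> int) \<Rightarrow> bool" where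
  "sym_GCM n A d \<longleftrightarrow>
     (\<forall>i\<in>{1..n}. A i i = 2) \<and>
     (\<forall>i\<in>{1..n}. \<forall>j\<in>{1..n}. i \<noteq> j \<longrightarrow> A i j \<le> 0) \<and>
     (\<forall>i\<in>{1..n}. \<forall>j\<in>{1..n}. A i j = 0 \<longleftrightarrow> A j i = 0) \<and>
     (\<forall>i\<in>{1..n}. d i > 0) \<and>
     Gcd (d ` {1..n}) = 1 \<and>
     (\<forall>i\<in>{1..n}. \<forall>j\<in>{1..n}. d i * A i j = d j * A j i)"

definition cmat :: "(nat \<Rightarrow> nat \<Rightarrow> int) \<Rightarrow> (nat \<Rightarrow> int) \<Rightarrow> nat \<Rightarrow> nat \<Rightarrow> int" where
  "cmat A d i j = d i * A i j"

definition sign_choice :: "nat \<Rightarrow> (nat \<Rightarrow> nat \<Rightarrow> int) \<Rightarrow> (nat \<Rightarrow> nat \<Rightarrow> int) \<Rightarrow> bool" where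
  "sign_choice n A \<sigma> \<longleftrightarrow>
     (\<forall>i\<in>{1..n}. \<forall>j\<in>{1..n}. i < j \<longrightarrow> A i j \<noteq> 0 \<longrightarrow> \<sigma> i j \<in> {1, -1})"

definition bmat :: "(nat \<Rightarrow> nat \<Rightarrow> int) \<Rightarrow> (nat \<Rightarrow> int) \<Rightarrow> (nat \<Rightarrow> nat \<Rightarrow> int) \<Rightarrow> nat \<Rightarrow> nat \<Rightarrow> int" where
  "bmat A d \<sigma> i j =
     (if A i j = 0 then 0
      else if i < j then \<sigma> i j * cmat A d i j
      else if i = j then 0
      else - \<sigma> j i * cmat A d i j)"

type_synonym fa = "nat list \<Rightarrow>\<^sub>0 Qq"

definition fa_mult :: "fa \<Rightarrow> fa \<Rightarrow> fa" where
  "fa_mult p r = (\<Sum>u\<in>Poly_Mapping.keys p. \<Sum>v\<in>Poly_Mapping.keys r. Poly_Mapping.single (u @ v) (Poly_Mapping.lookup p u * Poly_Mapping.lookup r v))"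

definition FreeAlg :: "nat \<Rightarrow> fa ring" where
  "FreeAlg n = \<lparr>carrier = {p. Poly_Mapping.keys p \<subseteq> lists {1..n}}, monoid.mult = fa_mult, one = Poly_Mapping.single [] 1,
              zero = 0, add = (+)\<rparr>"

definition fa_scalar :: "Qq \<Rightarrow> fa" where
  "fa_scalar c = Poly_Mapping.single [] c"

definition fa_gen :: "nat \<Rightarrow> fa" where
  "fa_gen i = Poly_Mapping.single [i] 1"

text \<open>Weight grading by the root lattice Z^n: the weight of a word is
  sum of alpha_i over its letters, encoded as its coefficient vector.\<close>
definition word_wt :: "nat list \<Rightarrow> (nat \<Rightarrow> int)" where
  "word_wt w = (\<lambda>i. int (count_list w i))"

definition fa_homog :: "(nat \<Rightarrow> int) \<Rightarrow> fa \<Rightarrow> bool" where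
  "fa_homog lam p \<longleftrightarrow> (\<forall>w\<in>Poly_Mapping.keys p. word_wt w = lam)"

definition serre_elem :: "(nat \<Rightarrow> nat \<Rightarrow> int) \<Rightarrow> (nat \<Rightarrow> int) \<Rightarrow> nat \<Rightarrow> nat \<Rightarrow> fa" where
  "serre_elem A d i j =
     (let N = nat (1 - A i j) in
      \<Sum>k\<in>{0..N}. Poly_Mapping.single (replicate (N - k) i @ [j] @ replicate k i)
                   ((-1) ^ k * qbinom (qq powi d i) N k))"

definition Uplus_ideal :: "nat \<Rightarrow> (nat \<Rightarrow> nat \<Rightarrow> int) \<Rightarrow> (nat \<Rightarrow> int) \<Rightarrow> fa set" where
  "Uplus_ideal n A d =
     genideal (FreeAlg n) {serre_elem A d i j | i j. i \<in> {1..n} \<and> j \<in> {1..n} \<and> i \<noteq> j}"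

definition Uplus :: "nat \<Rightarrow> (nat \<Rightarrow> nat \<Rightarrow> int) \<Rightarrow> (nat \<Rightarrow> int) \<Rightarrow> fa set ring" where
  "Uplus n A d = FreeAlg n Quot Uplus_ideal n A d"

definition PB_ideal :: "nat \<Rightarrow> (nat \<Rightarrow> nat \<Rightarrow> int) \<Rightarrow> fa set" where
  "PB_ideal n B =
     genideal (FreeAlg n) {Poly_Mapping.single [i, j] 1 - Poly_Mapping.single [j, i] (qq powi B i j)
                       | i j. i \<in> {1..n} \<and> j \<in> {1..n}}"

definition PB :: "nat \<Rightarrow> (nat \<Rightarrow> nat \<Rightarrow> int) \<Rightarrow> fa set ring" where
  "PB n B = FreeAlg n Quot PB_ideal n B"

definition cls :: "nat \<Rightarrow> fa set \<Rightarrow> fa \<Rightarrow> fa set" where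
  "cls n I x = I +>\<^bsub>FreeAlg n\<^esub> x"

definition quot_homog :: "nat \<Rightarrow> fa set \<Rightarrow> (nat \<Rightarrow> int) \<Rightarrow> fa set set" where
  "quot_homog n I lam = {cls n I x | x. x \<in> carrier (FreeAlg n) \<and> fa_homog lam x}"

definition graded_alg_surj :: "nat \<Rightarrow> fa set \<Rightarrow> fa set \<Rightarrow> (fa set \<Rightarrow> fa set) \<Rightarrow> bool" where
  "graded_alg_surj n I J \<pi> \<longleftrightarrow>
     \<pi> \<in> ring_hom (FreeAlg n Quot I) (FreeAlg n Quot J) \<and>
     (\<forall>c. \<forall>x\<in>carrier (FreeAlg n Quot I).
        \<pi> (cls n I (fa_scalar c) \<otimes>\<^bsub>FreeAlg n Quot I\<^esub> x) = cls n J (fa_scalar c) \<otimes>\<^bsub>FreeAlg n Quot J\<^esub> \<pi> x) \<and>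
     (\<forall>lam. \<pi> ` quot_homog n I lam \<subseteq> quot_homog n J lam) \<and>
     \<pi> ` carrier (FreeAlg n Quot I) = carrier (FreeAlg n Quot J)"

end

theory Submission
  imports Defs
begin

instantiation list :: (type) monoid_add
begin
definition zero_list_def: "(0::'a list) = []"
definition plus_list_def: "(xs::'a list) + ys = xs @ ys"
instance by standard (auto simp: zero_list_def plus_list_def)
end

lemma pm_sum_single: "(p::'a \<Rightarrow>\<^sub>0 'b::comm_monoid_add) = (\<Sum>u\<in>Poly_Mapping.keys p. Poly_Mapping.single u (Poly_Mapping.lookup p u))"
proof (rule poly_mapping_eqI)
  fix k
  show "Poly_Mapping.lookup p k = Poly_Mapping.lookup (\<Sum>u\<in>Poly_Mapping.keys p. Poly_Mapping.single u (Poly_Mapping.lookup p u)) k"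
    unfolding lookup_sum lookup_single when_def
    by (cases "k \<in> Poly_Mapping.keys p") (simp_all add: in_keys_iff)
qed

lemma fa_mult_eq: "fa_mult p r = p * r"
proof -
  have e1: "(\<Sum>u\<in>Poly_Mapping.keys p. Poly_Mapping.single u (Poly_Mapping.lookup p u)) = p"
    by (rule pm_sum_single[symmetric])
  have e2: "(\<Sum>v\<in>Poly_Mapping.keys r. Poly_Mapping.single v (Poly_Mapping.lookup r v)) = r"
    by (rule pm_sum_single[symmetric])
  have "fa_mult p r = (\<Sum>u\<in>Poly_Mapping.keys p. \<Sum>v\<in>Poly_Mapping.keys r.
      Poly_Mapping.single u (Poly_Mapping.lookup p u) * Poly_Mapping.single v (Poly_Mapping.lookup r v))"
    unfolding fa_mult_def by (simp only: mult_single plus_list_def)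
  also have "\<dots> = (\<Sum>u\<in>Poly_Mapping.keys p. Poly_Mapping.single u (Poly_Mapping.lookup p u)) *
      (\<Sum>v\<in>Poly_Mapping.keys r. Poly_Mapping.single v (Poly_Mapping.lookup r v))"
    by (rule sum_product[symmetric])
  finally show ?thesis unfolding e1 e2 .
qed

lemma keys_mult_lists:
  assumes "Poly_Mapping.keys (p::fa) \<subseteq> lists S" "Poly_Mapping.keys r \<subseteq> lists S"
  shows "Poly_Mapping.keys (p * r) \<subseteq> lists S"
  proof
  fix w assume "w \<in> Poly_Mapping.keys (p * r)"
  then obtain a b where "w = a @ b" "a \<in> Poly_Mapping.keys p" "b \<in> Poly_Mapping.keys r"
    using keys_mult[of p r] by (auto simp: plus_list_def)
  then show "w \<in> lists S" using assms by auto
qed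

lemma keys_add_lists:
  assumes "Poly_Mapping.keys (p::fa) \<subseteq> lists S" "Poly_Mapping.keys r \<subseteq> lists S"
  shows "Poly_Mapping.keys (p + r) \<subseteq> lists S"
  using keys_add[of p r] assms by auto

lemma keys_uminus_pm: "Poly_Mapping.keys (- (p::fa)) = Poly_Mapping.keys p"
  by (auto simp: in_keys_iff)

lemma one_fa: "(1::fa) = Poly_Mapping.single [] 1"
  by (metis single_one zero_list_def)

lemma FreeAlg_simps [simp]:
  "carrier (FreeAlg n) = {p. Poly_Mapping.keys p \<subseteq> lists {1..n}}"
  "monoid.mult (FreeAlg n) = (*)"
  "monoid.one (FreeAlg n) = 1"
  "ring.zero (FreeAlg n) = 0"
  "ring.add (FreeAlg n) = (+)"
  by (auto simp: FreeAlg_def fa_mult_eq[abs_def] one_fa)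

lemma ring_FreeAlg: "ring (FreeAlg n)"
proof (rule ringI)
  show "abelian_group (FreeAlg n)"
  proof (rule abelian_groupI)
    fix x assume "x \<in> carrier (FreeAlg n)"
    then show "\<exists>y\<in>carrier (FreeAlg n). y \<oplus>\<^bsub>FreeAlg n\<^esub> x = \<zero>\<^bsub>FreeAlg n\<^esub>"
      by (intro bexI[of _ "-x"]) (auto simp: keys_uminus_pm)
  qed (auto simp: keys_add_lists algebra_simps)
  show "monoid (FreeAlg n)"
    by (rule monoidI) (auto simp: keys_mult_lists mult.assoc one_fa[symmetric] zero_list_def)
qed (auto simp: algebra_simps)


locale qgood =
  fixes s :: Qq
  assumes s_nz: "s \<noteq> 0"
    and qint_nz: "\<And>m. m \<ge> 1 \<Longrightarrow> qint s m \<noteq> 0"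
begin

lemma qfact_0 [simp]: "qfact s 0 = 1"
  by (simp add: qfact_def)

lemma qfact_Suc: "qfact s (Suc m) = qfact s m * qint s (Suc m)"
  by (simp add: qfact_def prod.nat_ivl_Suc' mult.commute)

lemma qfact_nz: "qfact s m \<noteq> 0"
  by (induction m) (auto simp: qfact_Suc qint_nz)

lemma qint_add: "qint s (a + b) = inverse s ^ b * qint s a + s ^ a * qint s b"
proof -
  have "s ^ (a + b) - inverse s ^ (a + b) = inverse s ^ b * (s ^ a - inverse s ^ a) + s ^ a * (s ^ b - inverse s ^ b)"
    by (simp add: power_add algebra_simps)
  then show ?thesis unfolding qint_def
    by (simp add: add_divide_distrib)
qed

lemma qbinom_same [simp]: "qbinom s N N = 1"
  by (simp add: qbinom_def qfact_nz)

lemma qbinom_0 [simp]: "qbinom s N 0 = 1"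
  by (simp add: qbinom_def qfact_nz)

lemma pascal_inner:
  "qbinom s (Suc (j + Suc c)) (Suc j) =
     inverse s ^ Suc j * qbinom s (j + Suc c) (Suc j) + s ^ Suc c * qbinom s (j + Suc c) j"
proof -
  have e: "qint s (Suc (j + Suc c)) = inverse s ^ Suc j * qint s (Suc c) + s ^ Suc c * qint s (Suc j)"
    using qint_add[of "Suc c" "Suc j"] by (simp add: add.commute)
  have d1: "Suc (j + Suc c) - Suc j = Suc c" "j + Suc c - Suc j = c" "j + Suc c - j = Suc c" by auto
  have nz: "qfact s (j + Suc c) \<noteq> 0" "qfact s j \<noteq> 0" "qfact s c \<noteq> 0" "qint s (Suc j) \<noteq> 0" "qint s (Suc c) \<noteq> 0"
    by (auto simp: qfact_nz qint_nz)
  show ?thesis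
    unfolding qbinom_def d1 qfact_Suc[of "j + Suc c"] qfact_Suc[of j] qfact_Suc[of c] e
    using nz by (simp add: field_simps)
qed

definition P :: "nat \<Rightarrow> nat \<Rightarrow> Qq" where "P N k = (if k \<le> N then qbinom s N k else 0)"

lemma pascal_ext:
  assumes "j \<le> N"
  shows "qbinom s (Suc N) (Suc j) = inverse s ^ Suc j * P N (Suc j) + s ^ (N - j) * qbinom s N j"
proof (cases "j = N")
  case True then show ?thesis by (simp add: P_def)
next
  case False
  then obtain c where N: "N = j + Suc c" using assms by (metis add_Suc_right le_neq_implies_less less_imp_Suc_add)
  then show ?thesis using pascal_inner[of j c] by (simp add: P_def)
qed

lemma pw_eq:
  assumes "a + d = b + c"
  shows "s ^ a * inverse s ^ b = s ^ c * inverse s ^ d"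
proof -
  have one: "\<And>k. s ^ k * inverse s ^ k = 1" using s_nz by (simp add: power_mult_distrib[symmetric])
  have "s ^ a * inverse s ^ b = s ^ (a + d) * inverse s ^ (b + d)"
    using one[of d] by (simp add: power_add algebra_simps)
  also have "\<dots> = s ^ (b + c) * inverse s ^ (b + d)" using assms by simp
  also have "\<dots> = s ^ c * inverse s ^ d"
    using one[of b] by (simp add: power_add algebra_simps)
  finally show ?thesis .
qed

definition cc :: "nat \<Rightarrow> Qq \<Rightarrow> nat \<Rightarrow> Qq" where
  "cc N x k = (-1) ^ k * P N k * (s ^ (k * N) * inverse s ^ k) * x ^ k"

definition G :: "nat \<Rightarrow> Qq \<Rightarrow> Qq" where "G N x = (\<Sum>k\<le>N. cc N x k)"

lemma aux: "(a::Qq) * (I*p + E*q) * (X*I) * y = a*p*(X*I*I)*y + a*q*(X*I*E)*y"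
  by (simp add: algebra_simps)

lemma cc_step:
  assumes "j \<le> N"
  shows "cc (Suc N) x (Suc j) = cc N x (Suc j) - x * s ^ (2 * N) * cc N x j"
proof -
  obtain m where N: "N = j + m" using assms le_Suc_ex by blast
  have Pj: "P N j = qbinom s N j" "P (Suc N) (Suc j) = qbinom s (Suc N) (Suc j)" using assms by (auto simp: P_def)
  have si: "s * inverse s = 1" using s_nz by simp
  have A: "s ^ (Suc j * Suc N) * inverse s ^ Suc j * inverse s ^ Suc j = s ^ (Suc j * N) * inverse s ^ Suc j"
  proof -
    have "s ^ (Suc j * Suc N) * inverse s ^ (Suc j + Suc j) = s ^ (Suc j * N) * inverse s ^ Suc j"
      by (rule pw_eq) (simp add: algebra_simps)
    then show ?thesis by (simp add: power_add mult.assoc)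
  qed
  have B: "s ^ (Suc j * Suc N) * inverse s ^ Suc j * s ^ (N - j) = s ^ (2 * N) * (s ^ (j * N) * inverse s ^ j)"
  proof -
    have "s ^ (Suc j * Suc N + (N - j)) * inverse s ^ Suc j = s ^ (2 * N + j * N) * inverse s ^ j"
      by (rule pw_eq) (simp add: N algebra_simps)
    then show ?thesis by (simp add: power_add algebra_simps)
  qed
  show ?thesis
    unfolding cc_def Pj pascal_ext[OF assms] aux A B by (simp add: algebra_simps)
qed

lemma cc_0 [simp]: "cc N x 0 = 1"
  by (simp add: cc_def P_def)

lemma cc_over [simp]: "cc N x (Suc N) = 0"
  by (simp add: cc_def P_def)

lemma G_Suc: "G (Suc N) x = (1 - x * s ^ (2 * N)) * G N x"
proof -
  have "G (Suc N) x = cc (Suc N) x 0 + (\<Sum>j\<le>N. cc (Suc N) x (Suc j))"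
    unfolding G_def by (subst sum.atMost_Suc_shift) simp
  also have "(\<Sum>j\<le>N. cc (Suc N) x (Suc j)) = (\<Sum>j\<le>N. cc N x (Suc j)) - x * s ^ (2 * N) * G N x"
    unfolding G_def by (simp add: cc_step sum_subtractf sum_distrib_left)
  also have "(\<Sum>j\<le>N. cc N x (Suc j)) = G N x - 1"
  proof -
    have "G N x = (\<Sum>k\<le>Suc N. cc N x k)" unfolding G_def by simp
    also have "\<dots> = 1 + (\<Sum>j\<le>N. cc N x (Suc j))" by (subst sum.atMost_Suc_shift) simp
    finally show ?thesis by simp
  qed
  finally show ?thesis by (simp add: algebra_simps)
qed

lemma G_prod: "G N x = (\<Prod>j<N. (1 - x * s ^ (2 * j)))"
proof (induction N)
  case 0 then show ?case by (simp add: G_def)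
next
  case (Suc N) then show ?case by (simp add: G_Suc mult.commute)
qed

lemma G_one: "N \<ge> 1 \<Longrightarrow> G N 1 = 0"
  unfolding G_prod by (rule prod_zero) (auto intro!: bexI[of _ 0])

lemma serre_sum_zero:
  assumes "N \<ge> 1"
  shows "(\<Sum>k\<in>{0..N}. (-1) ^ k * qbinom s N k * (s ^ (N - 1)) ^ k) = 0"
proof -
  have "(\<Sum>k\<in>{0..N}. (-1) ^ k * qbinom s N k * (s ^ (N - 1)) ^ k) = G N 1"
    unfolding G_def atLeast0AtMost
  proof (rule sum.cong)
    fix k assume "k \<in> {..N}"
    then have "P N k = qbinom s N k" by (simp add: P_def)
    moreover have "(s ^ (N - 1)) ^ k = s ^ (k * N) * inverse s ^ k"
    proof -
      have "s ^ (k * (N - 1)) * inverse s ^ 0 = s ^ (k * N) * inverse s ^ k"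
        by (rule pw_eq) (use assms in \<open>simp add: algebra_simps\<close>)
      moreover have "(s ^ (N - 1)) ^ k = s ^ (k * (N - 1))" by (metis power_mult mult.commute)
      ultimately show ?thesis by simp
    qed
    ultimately show "(-1) ^ k * qbinom s N k * (s ^ (N - 1)) ^ k = cc N 1 k"
      by (simp add: cc_def)
  qed simp
  then show ?thesis using G_one[OF assms] by simp
qed

end

lemma qint_inverse: "qint (inverse s) m = qint s m"
  unfolding qint_def
  by (metis (no_types, lifting) inverse_inverse_eq minus_diff_eq divide_minus_right divide_minus_left minus_minus)

lemma qbinom_inverse: "qbinom (inverse s) N k = qbinom s N k"
  by (simp add: qbinom_def qfact_def qint_inverse)

lemma qgood_inverse: "qgood s \<Longrightarrow> qgood (inverse s)"
  unfolding qgood_def by (simp add: qint_inverse)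

lemma (in qgood) serre_sum_zero':
  assumes "N \<ge> 1"
  shows "(\<Sum>k\<in>{0..N}. (-1) ^ k * qbinom s N k * (inverse s ^ (N - 1)) ^ k) = 0"
  using qgood.serre_sum_zero[OF qgood_inverse[OF qgood_axioms] assms]
  by (simp add: qbinom_inverse)


lemma qq_power: "qq ^ k = Fraction_Field.Fract ([:0, 1:] ^ k) 1"
  by (induction k) (simp_all add: qq_def One_fract_def)

lemma qq_nz: "qq \<noteq> 0"
  by (simp add: qq_def Zero_fract_def eq_fract)

lemma qq_power_ne_1: "k > 0 \<Longrightarrow> qq ^ k \<noteq> 1"
proof
  assume k: "k > 0" and "qq ^ k = 1"
  then have "([:0, 1:] ^ k :: rat poly) = 1"
    by (simp add: qq_power One_fract_def eq_fract)
  then have "degree ([:0, 1:] ^ k :: rat poly) = 0" by simp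
  moreover have "degree ([:0, 1:] ^ k :: rat poly) = k"
    by (simp add: degree_power_eq)
  ultimately show False using k by simp
qed

lemma qgood_qq_power:
  assumes "D > 0"
  shows "qgood (qq ^ D)"
proof
  let ?t = "qq ^ D"
  show "?t \<noteq> 0" using qq_nz by simp
  fix m :: nat assume m: "m \<ge> 1"
  have tnz: "?t \<noteq> 0" using qq_nz by simp
  have ne: "?t ^ j \<noteq> inverse ?t ^ j" if "j \<ge> 1" for j
  proof
    assume "?t ^ j = inverse ?t ^ j"
    then have "?t ^ j * ?t ^ j = ?t ^ j * inverse (?t ^ j)" by (simp add: power_inverse)
    moreover have "?t ^ j \<noteq> 0" using tnz by simp
    ultimately have "?t ^ j * ?t ^ j = 1" by (metis right_inverse)
    then have "qq ^ (D * j + D * j) = 1" by (simp add: power_add power_mult)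
    then show False using qq_power_ne_1[of "D * j + D * j"] assms that by simp
  qed
  have "?t - inverse ?t \<noteq> 0" using ne[of 1] by simp
  moreover have "?t ^ m - inverse ?t ^ m \<noteq> 0" using ne[OF m] by simp
  ultimately show "qint ?t m \<noteq> 0" by (simp add: qint_def)
qed


lemma a_inv_FreeAlg: "x \<in> carrier (FreeAlg n) \<Longrightarrow> \<ominus>\<^bsub>FreeAlg n\<^esub> x = - x"
proof -
  assume x: "x \<in> carrier (FreeAlg n)"
  interpret ring "FreeAlg n" by (rule ring_FreeAlg)
  show ?thesis by (rule minus_equality) (use x in \<open>auto simp: keys_uminus_pm\<close>)
qed

lemma single_carrier: "set w \<subseteq> {1..n} \<Longrightarrow> Poly_Mapping.single w c \<in> carrier (FreeAlg n)"
  by (auto simp: keys_single)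

locale fideal =
  fixes n :: nat and K :: "fa set"
  assumes K_ideal: "ideal K (FreeAlg n)"
begin

lemma K_carr: "x \<in> K \<Longrightarrow> x \<in> carrier (FreeAlg n)"
  using K_ideal ideal.axioms(1) additive_subgroup.a_subset by (metis ideal_def subsetD)

lemma K_add: "a \<in> K \<Longrightarrow> b \<in> K \<Longrightarrow> a + b \<in> K"
  using additive_subgroup.a_closed[OF ideal.axioms(1)[OF K_ideal]] by simp

lemma K_zero: "0 \<in> K"
  using additive_subgroup.zero_closed[OF ideal.axioms(1)[OF K_ideal]] by simp

lemma K_uminus: "a \<in> K \<Longrightarrow> - a \<in> K"
  using additive_subgroup.a_inv_closed[OF ideal.axioms(1)[OF K_ideal], of a] a_inv_FreeAlg[OF K_carr, of a] by simp

lemma K_diff: "a \<in> K \<Longrightarrow> b \<in> K \<Longrightarrow> a - b \<in> K"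
  using K_add[OF _ K_uminus] by simp

lemma K_lmult: "a \<in> K \<Longrightarrow> x \<in> carrier (FreeAlg n) \<Longrightarrow> x * a \<in> K"
  using ideal.I_l_closed[OF K_ideal] by simp

lemma K_rmult: "a \<in> K \<Longrightarrow> x \<in> carrier (FreeAlg n) \<Longrightarrow> a * x \<in> K"
  using ideal.I_r_closed[OF K_ideal] by simp

lemma K_sum: "finite S \<Longrightarrow> (\<And>x. x \<in> S \<Longrightarrow> f x \<in> K) \<Longrightarrow> sum f S \<in> K"
  by (induction S rule: finite_induct) (auto simp: K_zero K_add)

end


lemma PB_gens_carr:
  "{Poly_Mapping.single [i, j] 1 - Poly_Mapping.single [j, i] (qq powi B i j) | i j. i \<in> {1..n} \<and> j \<in> {1..n}}
   \<subseteq> carrier (FreeAlg n)"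
proof -
  interpret ring "FreeAlg n" by (rule ring_FreeAlg)
  show ?thesis
  proof safe
    fix i j assume ij: "i \<in> {1..n}" "j \<in> {1..n}"
    have "Poly_Mapping.single [i, j] 1 \<in> carrier (FreeAlg n)" "Poly_Mapping.single [j, i] (qq powi B i j) \<in> carrier (FreeAlg n)"
      using ij by (auto intro: single_carrier)
    then show "Poly_Mapping.single [i, j] 1 - Poly_Mapping.single [j, i] (qq powi B i j) \<in> carrier (FreeAlg n)"
    proof -
      let ?a = "Poly_Mapping.single [i, j] (1::Qq)" and ?b = "Poly_Mapping.single [j, i] (qq powi B i j)"
      have "Poly_Mapping.keys (?a + - ?b) \<subseteq> lists {1..n}"
        by (rule keys_add_lists) (use ij in \<open>auto simp: keys_uminus_pm\<close>)
      then show ?thesis by (simp only: diff_conv_add_uminus mem_Collect_eq FreeAlg_simps)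
    qed
  qed
qed

lemma PB_fideal: "fideal n (PB_ideal n B)"
  unfolding fideal_def PB_ideal_def
  by (rule ring.genideal_ideal[OF ring_FreeAlg PB_gens_carr])

lemma swap_J:
  assumes ij: "i \<in> {1..n}" "j \<in> {1..n}" and uv: "set u \<subseteq> {1..n}" "set v \<subseteq> {1..n}"
  shows "Poly_Mapping.single (u @ [i, j] @ v) c - Poly_Mapping.single (u @ [j, i] @ v) (qq powi B i j * c) \<in> PB_ideal n B"
proof -
  interpret fideal n "PB_ideal n B" by (rule PB_fideal)
  let ?g = "Poly_Mapping.single [i, j] 1 - Poly_Mapping.single [j, i] (qq powi B i j)"
  have g: "?g \<in> PB_ideal n B"
    unfolding PB_ideal_def
    using ring.genideal_self[OF ring_FreeAlg PB_gens_carr] ij by blast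
  have "Poly_Mapping.single u 1 * ?g * Poly_Mapping.single v c \<in> PB_ideal n B"
    by (rule K_rmult[OF K_lmult[OF g]]) (use uv in \<open>auto intro: single_carrier\<close>)
  moreover have "Poly_Mapping.single u 1 * ?g * Poly_Mapping.single v c =
     Poly_Mapping.single (u @ [i, j] @ v) c - Poly_Mapping.single (u @ [j, i] @ v) (qq powi B i j * c)"
    by (simp add: algebra_simps mult_single plus_list_def)
  ultimately show ?thesis by simp
qed

lemma commute_J:
  assumes ij: "i \<in> {1..n}" "j \<in> {1..n}" and u: "set u \<subseteq> {1..n}"
  shows "Poly_Mapping.single (u @ [j] @ replicate k i) c
         - Poly_Mapping.single (u @ replicate k i @ [j]) ((qq powi B j i) ^ k * c) \<in> PB_ideal n B"
  using u
proof (induction k arbitrary: u c)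
  case 0 then show ?case
    using fideal.K_zero[OF PB_fideal] by simp
next
  case (Suc k)
  interpret fideal n "PB_ideal n B" by (rule PB_fideal)
  let ?t = "qq powi B j i"
  have s1: "Poly_Mapping.single (u @ [j, i] @ replicate k i) c - Poly_Mapping.single (u @ [i, j] @ replicate k i) (?t * c) \<in> PB_ideal n B"
    by (rule swap_J) (use ij Suc.prems in auto)
  have s2: "Poly_Mapping.single ((u @ [i]) @ [j] @ replicate k i) (?t * c)
         - Poly_Mapping.single ((u @ [i]) @ replicate k i @ [j]) (?t ^ k * (?t * c)) \<in> PB_ideal n B"
    by (rule Suc.IH) (use ij Suc.prems in auto)
  have "Poly_Mapping.single (u @ [j, i] @ replicate k i) c - Poly_Mapping.single ((u @ [i]) @ replicate k i @ [j]) (?t ^ k * (?t * c)) \<in> PB_ideal n B"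
    using K_add[OF s1 s2] by simp
  moreover have "(u @ [i]) @ replicate k i @ [j] = u @ replicate (Suc k) i @ [j]"
    by (simp add: replicate_app_Cons_same)
  ultimately show ?case by (simp add: algebra_simps)
qed


lemma single_sum_pm: "Poly_Mapping.single w (sum f S) = (\<Sum>x\<in>S. Poly_Mapping.single w (f x))"
  by (induction S rule: infinite_finite_induct) (auto simp: single_add)

lemma bmat_exp:
  assumes G: "sym_GCM n A d" and sc: "sign_choice n A \<sigma>"
    and ij: "i \<in> {1..n}" "j \<in> {1..n}" "i \<noteq> j"
  shows "\<exists>e\<in>{1, -1}. bmat A d \<sigma> j i = e * (d i * (- A i j))"
proof -
  have sym: "d j * A j i = d i * A i j" and z: "A i j = 0 \<longleftrightarrow> A j i = 0"
    using G ij unfolding sym_GCM_def by auto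
  show ?thesis
  proof (cases "A j i = 0")
    case True then show ?thesis using z by (auto simp: bmat_def)
  next
    case False
    show ?thesis
    proof (cases "j < i")
      case True
      then have "\<sigma> j i \<in> {1, -1}" using sc ij False unfolding sign_choice_def by auto
      then show ?thesis using True False sym by (auto simp: bmat_def cmat_def)
    next
      case False2: False
      then have "i < j" using ij by auto
      then have "\<sigma> i j \<in> {1, -1}" using sc ij False z unfolding sign_choice_def by auto
      then show ?thesis using False2 False sym \<open>i < j\<close> by (auto simp: bmat_def cmat_def)
    qed
  qed
qed

lemma serre_J:
  assumes G: "sym_GCM n A d" and sc: "sign_choice n A \<sigma>"
    and ij: "i \<in> {1..n}" "j \<in> {1..n}" "i \<noteq> j"
  shows "serre_elem A d i j \<in> PB_ideal n (bmat A d \<sigma>)"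
proof -
  interpret fideal n "PB_ideal n (bmat A d \<sigma>)" by (rule PB_fideal)
  define N where "N = nat (1 - A i j)"
  have Aij: "A i j \<le> 0" using G ij unfolding sym_GCM_def by auto
  have di: "d i > 0" using G ij unfolding sym_GCM_def by auto
  have N1: "N \<ge> 1" and NA: "int N = 1 - A i j" using Aij by (auto simp: N_def)
  define D where "D = nat (d i)"
  have D: "D > 0" "int D = d i" using di by (auto simp: D_def)
  define s where "s = qq powi d i"
  have sD: "s = qq ^ D" unfolding s_def using D by (metis power_int_of_nat)
  interpret qgood s unfolding sD by (rule qgood_qq_power[OF D(1)])
  define t where "t = qq powi bmat A d \<sigma> j i"
  have st: "s ^ (N - 1) = qq powi (d i * (- A i j))"
  proof -
    have "d i * (- A i j) = int (D * (N - 1))" using D NA N1 by (simp add: of_nat_diff)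
    then show ?thesis unfolding sD by (metis power_int_of_nat power_mult)
  qed
  have t: "t = s ^ (N - 1) \<or> t = inverse s ^ (N - 1)"
  proof -
    obtain e where e: "e \<in> {1, -1}" "bmat A d \<sigma> j i = e * (d i * (- A i j))"
      using bmat_exp[OF G sc ij] by blast
    show ?thesis
    proof (cases "e = 1")
      case True then show ?thesis using e unfolding t_def st by simp
    next
      case False
      then have "bmat A d \<sigma> j i = - (d i * (- A i j))" using e by simp
      then have "t = inverse (qq powi (d i * (- A i j)))" unfolding t_def by (simp only: power_int_minus)
      then show ?thesis unfolding st[symmetric] by (simp add: power_inverse)
    qed
  qed
  define c where "c k = (-1) ^ k * qbinom s N k" for k
  have sum0: "(\<Sum>k\<in>{0..N}. c k * t ^ k) = 0"
    using t serre_sum_zero[OF N1] serre_sum_zero'[OF N1] unfolding c_def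
    by auto
  have serre: "serre_elem A d i j = (\<Sum>k\<in>{0..N}. Poly_Mapping.single (replicate (N - k) i @ [j] @ replicate k i) (c k))"
    unfolding serre_elem_def Let_def N_def[symmetric] c_def s_def ..
  have diffs: "(\<Sum>k\<in>{0..N}. Poly_Mapping.single (replicate (N - k) i @ [j] @ replicate k i) (c k)
        - Poly_Mapping.single (replicate N i @ [j]) (t ^ k * c k)) \<in> PB_ideal n (bmat A d \<sigma>)"
  proof (rule K_sum)
    fix k assume k: "k \<in> {0..N}"
    have "Poly_Mapping.single (replicate (N - k) i @ [j] @ replicate k i) (c k)
        - Poly_Mapping.single (replicate (N - k) i @ replicate k i @ [j]) (t ^ k * c k) \<in> PB_ideal n (bmat A d \<sigma>)"
      unfolding t_def by (rule commute_J) (use ij in auto)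
    moreover have "replicate (N - k) i @ replicate k i @ [j] = replicate N i @ [j]"
      using k by (simp flip: replicate_add append_assoc)
    ultimately show "Poly_Mapping.single (replicate (N - k) i @ [j] @ replicate k i) (c k)
        - Poly_Mapping.single (replicate N i @ [j]) (t ^ k * c k) \<in> PB_ideal n (bmat A d \<sigma>)" by simp
  qed simp
  have "(\<Sum>k\<in>{0..N}. Poly_Mapping.single (replicate N i @ [j]) (t ^ k * c k)) = 0"
    using sum0 by (simp add: single_sum_pm[symmetric] mult.commute)
  then show ?thesis using diffs unfolding serre by (simp add: sum_subtractf)
qed


context fideal
begin

lemma cls_mem: "y \<in> cls n K x \<longleftrightarrow> (\<exists>h\<in>K. y = h + x)"
  unfolding cls_def a_r_coset_def' by auto

lemma cls_eq_iff:
  assumes "x \<in> carrier (FreeAlg n)" "y \<in> carrier (FreeAlg n)"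
  shows "cls n K x = cls n K y \<longleftrightarrow> x - y \<in> K"
proof
  assume "cls n K x = cls n K y"
  moreover have "x \<in> cls n K x" using K_zero cls_mem by fastforce
  ultimately obtain h where "h \<in> K" "x = h + y" using cls_mem by blast
  then show "x - y \<in> K" by simp
next
  assume d: "x - y \<in> K"
  show "cls n K x = cls n K y"
  proof (rule Set.set_eqI)
    fix z
    have "(\<exists>h\<in>K. z = h + x) \<longleftrightarrow> (\<exists>h\<in>K. z = h + y)"
    proof
      assume "\<exists>h\<in>K. z = h + x"
      then obtain h where "h \<in> K" "z = h + x" by blast
      then show "\<exists>h\<in>K. z = h + y" using K_add[OF _ d, of h] by (intro bexI[of _ "h + (x - y)"]) auto
    next
      assume "\<exists>h\<in>K. z = h + y"
      then obtain h where "h \<in> K" "z = h + y" by blast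
      then show "\<exists>h\<in>K. z = h + x" using K_diff[OF _ d, of h] by (intro bexI[of _ "h - (x - y)"]) auto
    qed
    then show "z \<in> cls n K x \<longleftrightarrow> z \<in> cls n K y" by (simp add: cls_mem)
  qed
qed

lemma quot_carrier: "carrier (FreeAlg n Quot K) = {cls n K x | x. x \<in> carrier (FreeAlg n)}"
  unfolding FactRing_def A_RCOSETS_def' cls_def by auto

lemma cls_hom: "cls n K \<in> ring_hom (FreeAlg n) (FreeAlg n Quot K)"
  unfolding cls_def[abs_def] using ideal.rcos_ring_hom[OF K_ideal] by simp

lemma cls_mult: "x \<in> carrier (FreeAlg n) \<Longrightarrow> y \<in> carrier (FreeAlg n) \<Longrightarrow>
   cls n K (x * y) = cls n K x \<otimes>\<^bsub>FreeAlg n Quot K\<^esub> cls n K y"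
  using ring_hom_mult[OF cls_hom] by fastforce

lemma cls_add: "x \<in> carrier (FreeAlg n) \<Longrightarrow> y \<in> carrier (FreeAlg n) \<Longrightarrow>
   cls n K (x + y) = cls n K x \<oplus>\<^bsub>FreeAlg n Quot K\<^esub> cls n K y"
  using ring_hom_add[OF cls_hom] by fastforce

lemma cls_one: "cls n K 1 = \<one>\<^bsub>FreeAlg n Quot K\<^esub>"
  using ring_hom_one[OF cls_hom] by fastforce

lemma cls_zero: "cls n K 0 = \<zero>\<^bsub>FreeAlg n Quot K\<^esub>"
  using ring_hom_zero[OF cls_hom ring_FreeAlg ideal.quotient_is_ring[OF K_ideal]] by simp

lemma cls_carr: "x \<in> carrier (FreeAlg n) \<Longrightarrow> cls n K x \<in> carrier (FreeAlg n Quot K)"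
  using quot_carrier by auto

end

lemma keys_single_sub: "Poly_Mapping.keys (Poly_Mapping.single w c) \<subseteq> {w}"
  by simp

lemma serre_carr:
  assumes "i \<in> {1..n}" "j \<in> {1..n}"
  shows "serre_elem A d i j \<in> carrier (FreeAlg n)"
proof -
  have "Poly_Mapping.keys (serre_elem A d i j) \<subseteq> lists {1..n}"
    unfolding serre_elem_def Let_def
    by (rule order_trans[OF keys_sum]) (use assms in auto)
  then show ?thesis by simp
qed

lemma Uplus_gens_carr:
  "{serre_elem A d i j | i j. i \<in> {1..n} \<and> j \<in> {1..n} \<and> i \<noteq> j} \<subseteq> carrier (FreeAlg n)"
  using serre_carr by blast

lemma Uplus_fideal: "fideal n (Uplus_ideal n A d)"
  unfolding fideal_def Uplus_ideal_def
  by (rule ring.genideal_ideal[OF ring_FreeAlg Uplus_gens_carr])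

lemma I_sub_J:
  assumes G: "sym_GCM n A d" and sc: "sign_choice n A \<sigma>"
  shows "Uplus_ideal n A d \<subseteq> PB_ideal n (bmat A d \<sigma>)"
  unfolding Uplus_ideal_def
  by (rule ring.genideal_minimal[OF ring_FreeAlg]) (use fideal.K_ideal[OF PB_fideal] serre_J[OF G sc] in auto)


lemma cls_word_gen:
  assumes "fideal n I" "fideal n J"
    and hom: "\<pi>' \<in> ring_hom (FreeAlg n Quot I) (FreeAlg n Quot J)"
    and gen: "\<forall>i\<in>{1..n}. \<pi>' (cls n I (fa_gen i)) = cls n J (fa_gen i)"
    and w: "set w \<subseteq> {1..n}"
  shows "\<pi>' (cls n I (Poly_Mapping.single w 1)) = cls n J (Poly_Mapping.single w 1)"
  using w
proof (induction w)
  case Nil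
  then show ?case using fideal.cls_one[OF assms(1)] fideal.cls_one[OF assms(2)] ring_hom_one[OF hom]
    by (simp add: one_fa)
next
  case (Cons a w)
  have a: "a \<in> {1..n}" and w': "set w \<subseteq> {1..n}" using Cons.prems by auto
  have e: "Poly_Mapping.single (a # w) (1::Qq) = fa_gen a * Poly_Mapping.single w 1"
    by (simp add: fa_gen_def mult_single plus_list_def)
  have ga: "fa_gen a \<in> carrier (FreeAlg n)" using a by (simp add: fa_gen_def)
  have gw: "Poly_Mapping.single w (1::Qq) \<in> carrier (FreeAlg n)" using w' by (rule single_carrier)
  show ?case
    unfolding e fideal.cls_mult[OF assms(1) ga gw] fideal.cls_mult[OF assms(2) ga gw]
    using ring_hom_mult[OF hom fideal.cls_carr[OF assms(1) ga] fideal.cls_carr[OF assms(1) gw]]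
      Cons.IH[OF w'] gen a by simp
qed

lemma cls_uniq:
  assumes I: "fideal n I" and J: "fideal n J"
    and hom: "\<pi>' \<in> ring_hom (FreeAlg n Quot I) (FreeAlg n Quot J)"
    and sc: "\<forall>c. \<forall>x\<in>carrier (FreeAlg n Quot I).
        \<pi>' (cls n I (fa_scalar c) \<otimes>\<^bsub>FreeAlg n Quot I\<^esub> x) = cls n J (fa_scalar c) \<otimes>\<^bsub>FreeAlg n Quot J\<^esub> \<pi>' x"
    and gen: "\<forall>i\<in>{1..n}. \<pi>' (cls n I (fa_gen i)) = cls n J (fa_gen i)"
    and x: "x \<in> carrier (FreeAlg n)"
  shows "\<pi>' (cls n I x) = cls n J x"
proof -
  have single: "\<pi>' (cls n I (Poly_Mapping.single w c)) = cls n J (Poly_Mapping.single w c)"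
    if w: "set w \<subseteq> {1..n}" for w c
  proof -
    have e: "Poly_Mapping.single w c = fa_scalar c * Poly_Mapping.single w (1::Qq)"
      by (simp add: fa_scalar_def mult_single plus_list_def)
    have gs: "fa_scalar c \<in> carrier (FreeAlg n)" by (simp add: fa_scalar_def)
    have gw: "Poly_Mapping.single w (1::Qq) \<in> carrier (FreeAlg n)" using w by (rule single_carrier)
    show ?thesis
      unfolding e fideal.cls_mult[OF I gs gw] fideal.cls_mult[OF J gs gw]
      using sc fideal.cls_carr[OF I gw] cls_word_gen[OF I J hom gen w] by simp
  qed
  have rI: "ring (FreeAlg n Quot I)" and rJ: "ring (FreeAlg n Quot J)"
    using ideal.quotient_is_ring fideal.K_ideal I J by blast+
  have sumlem: "\<forall>u\<in>S. set u \<subseteq> {1..n} \<Longrightarrow>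
      \<pi>' (cls n I (\<Sum>u\<in>S. Poly_Mapping.single u (f u))) = cls n J (\<Sum>u\<in>S. Poly_Mapping.single u (f u))"
    if "finite S" for S :: "nat list set" and f
    using that
  proof (induction S rule: finite_induct)
    case empty
    then show ?case using fideal.cls_zero[OF I] fideal.cls_zero[OF J] ring_hom_zero[OF hom rI rJ] by simp
  next
    case (insert u S)
    have cu: "Poly_Mapping.single u (f u) \<in> carrier (FreeAlg n)" using insert.prems by (auto intro: single_carrier)
    have cS: "(\<Sum>u\<in>S. Poly_Mapping.single u (f u)) \<in> carrier (FreeAlg n)"
    proof -
      have "Poly_Mapping.keys (\<Sum>u\<in>S. Poly_Mapping.single u (f u)) \<subseteq> lists {1..n}"
        by (rule order_trans[OF keys_sum]) (use insert.prems in auto)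
      then show ?thesis by simp
    qed
    show ?case
      unfolding sum.insert[OF insert.hyps] fideal.cls_add[OF I cu cS] fideal.cls_add[OF J cu cS]
      using ring_hom_add[OF hom fideal.cls_carr[OF I cu] fideal.cls_carr[OF I cS]]
        single insert.prems insert.IH by simp
  qed
  have "x = (\<Sum>u\<in>Poly_Mapping.keys x. Poly_Mapping.single u (Poly_Mapping.lookup x u))"
    by (rule pm_sum_single)
  moreover have "\<forall>u\<in>Poly_Mapping.keys x. set u \<subseteq> {1..n}" using x by auto
  ultimately show ?thesis using sumlem[of "Poly_Mapping.keys x" "Poly_Mapping.lookup x"] by simp
qed

theorem proposition4p2:
  fixes n :: nat and A :: "nat \<Rightarrow> nat \<Rightarrow> int" and d :: "nat \<Rightarrow> int"
    and \<sigma> :: "nat \<Rightarrow> nat \<Rightarrow> int"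
  assumes "sym_GCM n A d"
    and "sign_choice n A \<sigma>"
  shows "\<exists>\<pi>. graded_alg_surj n (Uplus_ideal n A d) (PB_ideal n (bmat A d \<sigma>)) \<pi>
            \<and> (\<forall>i\<in>{1..n}. \<pi> (cls n (Uplus_ideal n A d) (fa_gen i))
                            = cls n (PB_ideal n (bmat A d \<sigma>)) (fa_gen i))
            \<and> (\<forall>\<pi>'. graded_alg_surj n (Uplus_ideal n A d) (PB_ideal n (bmat A d \<sigma>)) \<pi>'
                    \<and> (\<forall>i\<in>{1..n}. \<pi>' (cls n (Uplus_ideal n A d) (fa_gen i))
                                   = cls n (PB_ideal n (bmat A d \<sigma>)) (fa_gen i))
                    \<longrightarrow> (\<forall>x\<in>carrier (Uplus n A d). \<pi>' x = \<pi> x))"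
proof -
  define I where "I = Uplus_ideal n A d"
  define J where "J = PB_ideal n (bmat A d \<sigma>)"
  have fI: "fideal n I" unfolding I_def by (rule Uplus_fideal)
  have fJ: "fideal n J" unfolding J_def by (rule PB_fideal)
  have IJ: "I \<subseteq> J" unfolding I_def J_def by (rule I_sub_J[OF assms])
  have mclosed: "x * y \<in> carrier (FreeAlg n)" if "x \<in> carrier (FreeAlg n)" "y \<in> carrier (FreeAlg n)" for x y
    using that by (simp add: keys_mult_lists)
  have aclosed: "x + y \<in> carrier (FreeAlg n)" if "x \<in> carrier (FreeAlg n)" "y \<in> carrier (FreeAlg n)" for x y
    using that by (simp add: keys_add_lists)
  define \<pi> where "\<pi> X = (\<Union>x\<in>X. cls n J x)" for X
  have \<pi>_cls: "\<pi> (cls n I x) = cls n J x" if x: "x \<in> carrier (FreeAlg n)" for x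
  proof -
    have "cls n J y = cls n J x" if "y \<in> cls n I x" for y
    proof -
      obtain h where h: "h \<in> I" "y = h + x" using \<open>y \<in> cls n I x\<close> fideal.cls_mem[OF fI] by blast
      have hc: "h \<in> carrier (FreeAlg n)" using h fideal.K_carr[OF fI] by blast
      have "h + x \<in> carrier (FreeAlg n)" using hc x by (rule aclosed)
      moreover have "(h + x) - x \<in> J" using h IJ by auto
      ultimately show ?thesis using fideal.cls_eq_iff[OF fJ _ x] h by simp
    qed
    moreover have "x \<in> cls n I x" using fideal.cls_mem[OF fI] fideal.K_zero[OF fI] by fastforce
    ultimately show ?thesis unfolding \<pi>_def by blast
  qed
  have carrI: "X \<in> carrier (FreeAlg n Quot I) \<longleftrightarrow> (\<exists>x\<in>carrier (FreeAlg n). X = cls n I x)" for X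
    using fideal.quot_carrier[OF fI] by blast
  have carrJ: "X \<in> carrier (FreeAlg n Quot J) \<longleftrightarrow> (\<exists>x\<in>carrier (FreeAlg n). X = cls n J x)" for X
    using fideal.quot_carrier[OF fJ] by blast
  have hom: "\<pi> \<in> ring_hom (FreeAlg n Quot I) (FreeAlg n Quot J)"
  proof (rule ring_hom_memI)
    fix X assume X: "X \<in> carrier (FreeAlg n Quot I)"
    obtain x where "x \<in> carrier (FreeAlg n)" "X = cls n I x" using carrI[THEN iffD1, OF X] by blast
    then show "\<pi> X \<in> carrier (FreeAlg n Quot J)" using \<pi>_cls carrJ by auto
  next
    fix X Y assume XY: "X \<in> carrier (FreeAlg n Quot I)" "Y \<in> carrier (FreeAlg n Quot I)"
    obtain x where x: "x \<in> carrier (FreeAlg n)" "X = cls n I x" using carrI[THEN iffD1, OF XY(1)] by blast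
    obtain y where y: "y \<in> carrier (FreeAlg n)" "Y = cls n I y" using carrI[THEN iffD1, OF XY(2)] by blast
    note xy = x y
    show "\<pi> (X \<otimes>\<^bsub>FreeAlg n Quot I\<^esub> Y) = \<pi> X \<otimes>\<^bsub>FreeAlg n Quot J\<^esub> \<pi> Y"
    proof -
      have "\<pi> (X \<otimes>\<^bsub>FreeAlg n Quot I\<^esub> Y) = \<pi> (cls n I (x * y))"
        using xy fideal.cls_mult[OF fI x(1) y(1)] by simp
      also have "\<dots> = cls n J (x * y)" by (rule \<pi>_cls[OF mclosed[OF x(1) y(1)]])
      also have "\<dots> = \<pi> X \<otimes>\<^bsub>FreeAlg n Quot J\<^esub> \<pi> Y"
        using xy fideal.cls_mult[OF fJ x(1) y(1)] \<pi>_cls[OF x(1)] \<pi>_cls[OF y(1)] by simp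
      finally show ?thesis .
    qed
    show "\<pi> (X \<oplus>\<^bsub>FreeAlg n Quot I\<^esub> Y) = \<pi> X \<oplus>\<^bsub>FreeAlg n Quot J\<^esub> \<pi> Y"
    proof -
      have "\<pi> (X \<oplus>\<^bsub>FreeAlg n Quot I\<^esub> Y) = \<pi> (cls n I (x + y))"
        using xy fideal.cls_add[OF fI x(1) y(1)] by simp
      also have "\<dots> = cls n J (x + y)" by (rule \<pi>_cls[OF aclosed[OF x(1) y(1)]])
      also have "\<dots> = \<pi> X \<oplus>\<^bsub>FreeAlg n Quot J\<^esub> \<pi> Y"
        using xy fideal.cls_add[OF fJ x(1) y(1)] \<pi>_cls[OF x(1)] \<pi>_cls[OF y(1)] by simp
      finally show ?thesis .
    qed
  next
    show "\<pi> \<one>\<^bsub>FreeAlg n Quot I\<^esub> = \<one>\<^bsub>FreeAlg n Quot J\<^esub>"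
      using fideal.cls_one[OF fI] fideal.cls_one[OF fJ] \<pi>_cls[of 1] by (simp add: one_fa)
  qed
  have scal: "fa_scalar c \<in> carrier (FreeAlg n)" for c by (simp add: fa_scalar_def)
  have gens: "fa_gen i \<in> carrier (FreeAlg n)" if "i \<in> {1..n}" for i using that by (simp add: fa_gen_def)
  have gas: "graded_alg_surj n I J \<pi>"
    unfolding graded_alg_surj_def
  proof (intro conjI allI ballI)
    show "\<pi> \<in> ring_hom (FreeAlg n Quot I) (FreeAlg n Quot J)" by (rule hom)
  next
    fix c X assume X: "X \<in> carrier (FreeAlg n Quot I)"
    obtain x where x: "x \<in> carrier (FreeAlg n)" "X = cls n I x" using carrI[THEN iffD1, OF X] by blast
    show "\<pi> (cls n I (fa_scalar c) \<otimes>\<^bsub>FreeAlg n Quot I\<^esub> X) = cls n J (fa_scalar c) \<otimes>\<^bsub>FreeAlg n Quot J\<^esub> \<pi> X"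
    proof -
      have "\<pi> (cls n I (fa_scalar c) \<otimes>\<^bsub>FreeAlg n Quot I\<^esub> X) = \<pi> (cls n I (fa_scalar c * x))"
        using x fideal.cls_mult[OF fI scal x(1)] by simp
      also have "\<dots> = cls n J (fa_scalar c * x)" by (rule \<pi>_cls[OF mclosed[OF scal x(1)]])
      also have "\<dots> = cls n J (fa_scalar c) \<otimes>\<^bsub>FreeAlg n Quot J\<^esub> \<pi> X"
        using x fideal.cls_mult[OF fJ scal x(1)] \<pi>_cls[OF x(1)] by simp
      finally show ?thesis .
    qed
  next
    fix lam
    show "\<pi> ` quot_homog n I lam \<subseteq> quot_homog n J lam"
      unfolding quot_homog_def using \<pi>_cls by auto
  next
    show "\<pi> ` carrier (FreeAlg n Quot I) = carrier (FreeAlg n Quot J)"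
    proof
      show "\<pi> ` carrier (FreeAlg n Quot I) \<subseteq> carrier (FreeAlg n Quot J)"
      proof
        fix Y assume "Y \<in> \<pi> ` carrier (FreeAlg n Quot I)"
        then obtain X where X: "X \<in> carrier (FreeAlg n Quot I)" "Y = \<pi> X" by blast
        obtain x where x: "x \<in> carrier (FreeAlg n)" "X = cls n I x" using carrI[THEN iffD1, OF X(1)] by blast
        show "Y \<in> carrier (FreeAlg n Quot J)"
          using carrJ[THEN iffD2] X x \<pi>_cls[OF x(1)] by blast
      qed
      show "carrier (FreeAlg n Quot J) \<subseteq> \<pi> ` carrier (FreeAlg n Quot I)"
      proof
        fix Y assume Y: "Y \<in> carrier (FreeAlg n Quot J)"
        obtain y where "y \<in> carrier (FreeAlg n)" "Y = cls n J y" using carrJ[THEN iffD1, OF Y] by blast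
        then show "Y \<in> \<pi> ` carrier (FreeAlg n Quot I)"
          using carrI \<pi>_cls by (metis image_eqI)
      qed
    qed
  qed
  have gen\<pi>: "\<forall>i\<in>{1..n}. \<pi> (cls n I (fa_gen i)) = cls n J (fa_gen i)"
    using \<pi>_cls gens by blast
  have uniq: "\<forall>x\<in>carrier (Uplus n A d). \<pi>' x = \<pi> x"
    if "graded_alg_surj n I J \<pi>'" "\<forall>i\<in>{1..n}. \<pi>' (cls n I (fa_gen i)) = cls n J (fa_gen i)" for \<pi>'
  proof
    fix X assume X: "X \<in> carrier (Uplus n A d)"
    have X': "X \<in> carrier (FreeAlg n Quot I)" using X unfolding Uplus_def I_def .
    obtain x where x: "x \<in> carrier (FreeAlg n)" "X = cls n I x" using carrI[THEN iffD1, OF X'] by blast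
    have "\<pi>' (cls n I x) = cls n J x"
      by (rule cls_uniq[OF fI fJ _ _ that(2) x(1)]) (use that(1) in \<open>auto simp: graded_alg_surj_def\<close>)
    then show "\<pi>' X = \<pi> X" using x \<pi>_cls by simp
  qed
  show ?thesis
    unfolding I_def[symmetric] J_def[symmetric]
    using gas gen\<pi> uniq by blast
qed

end
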